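(* For $z\in\mathbb{R}^d$ define $\|z\|_{1,\text{top-}\alpha\%}:=\|z\odot\texttt{FLT}_\alpha(z)\|_1$. Then $\|\cdot\|_{1,\text{top-}\alpha\%}$ is a norm on $\mathbb{R}^d$.
   Context: The coordinates of $\mathbb{R}^d$ are partitioned into $B$ blocks of sizes $d_1,\dots,d_B$ with $\sum_kd_k=d$; write $z=(z^{(1)},\dots,z^{(B)})$, $z^{(k)}\in\mathbb{R}^{d_k}$. Fix $\alpha\%\in(0,1]$. The top-$\alpha\%$ filter $\texttt{FLT}_\alpha(z)\in\{0,1\}^d$ is defined blockwise: in block $k$ it equals $1$ exactly on a set $S_k$ of $\lceil d_k\cdot\alpha\%\rceil$ indices whose absolute values $|z^{(k)}_i|$ rank within the top-$\alpha\%$ of the block (when several entries have equal absolute value, those with smallest indices are selected first), and $0$ elsewhere. $\odot$ is the entrywise product. *)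

theory Defs
  imports Complex_Main
begin

text \<open>Vectors of R^d are represented as functions nat => real vanishing at indices >= d
(coordinates 0..d-1). The block partition is given by the list ds of block sizes
d_1,...,d_B; block k (0-based) occupies the contiguous index range starting at
the sum of the preceding block sizes.\<close>

definition blk_start :: "nat list \<Rightarrow> nat \<Rightarrow> nat" where
  "blk_start ds k = sum_list (take k ds)"

definition blk :: "nat list \<Rightarrow> nat \<Rightarrow> nat set" where
  "blk ds k = {blk_start ds k ..< blk_start ds k + ds ! k}"

definition blk_rank :: "(nat \<Rightarrow> real) \<Rightarrow> nat set \<Rightarrow> nat \<Rightarrow> nat" where
  "blk_rank z S i = card {j \<in> S. \<bar>z j\<bar> > \<bar>z i\<bar> \<or> (\<bar>z j\<bar> = \<bar>z i\<bar> \<and> j < i)}"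

definition FLT :: "nat list \<Rightarrow> real \<Rightarrow> (nat \<Rightarrow> real) \<Rightarrow> nat \<Rightarrow> real" where
  "FLT ds \<alpha> z i = (if \<exists>k < length ds. i \<in> blk ds k \<and>
       blk_rank z (blk ds k) i < nat \<lceil>real (ds ! k) * \<alpha>\<rceil> then 1 else 0)"

definition top_norm :: "nat list \<Rightarrow> real \<Rightarrow> (nat \<Rightarrow> real) \<Rightarrow> real" where
  "top_norm ds \<alpha> z = (\<Sum>i < sum_list ds. \<bar>z i * FLT ds \<alpha> z i\<bar>)"

definition vecs :: "nat \<Rightarrow> (nat \<Rightarrow> real) set" where
  "vecs d = {z. \<forall>i \<ge> d. z i = 0}"

definition is_norm_on :: "(nat \<Rightarrow> real) set \<Rightarrow> ((nat \<Rightarrow> real) \<Rightarrow> real) \<Rightarrow> bool" where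
  "is_norm_on V N \<longleftrightarrow>
     (\<forall>z \<in> V. N z \<ge> 0) \<and>
     (\<forall>z \<in> V. N z = 0 \<longleftrightarrow> z = (\<lambda>_. 0)) \<and>
     (\<forall>c::real. \<forall>z \<in> V. N (\<lambda>i. c * z i) = \<bar>c\<bar> * N z) \<and>
     (\<forall>x \<in> V. \<forall>y \<in> V. N (\<lambda>i. x i + y i) \<le> N x + N y)"

end

theory Submission
  imports Defs
begin

lemma rank_lt:
  assumes "finite S" "i \<in> S" "j \<in> S"
    "\<bar>z j\<bar> > \<bar>z i\<bar> \<or> (\<bar>z j\<bar> = \<bar>z i\<bar> \<and> j < i)"
  shows "blk_rank z S j < blk_rank z S i"
  unfolding blk_rank_def
proof (rule psubset_card_mono)
  show "finite {l \<in> S. \<bar>z i\<bar> < \<bar>z l\<bar> \<or> \<bar>z l\<bar> = \<bar>z i\<bar> \<and> l < i}" using assms by simp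
  show "{l \<in> S. \<bar>z j\<bar> < \<bar>z l\<bar> \<or> \<bar>z l\<bar> = \<bar>z j\<bar> \<and> l < j}
    \<subset> {l \<in> S. \<bar>z i\<bar> < \<bar>z l\<bar> \<or> \<bar>z l\<bar> = \<bar>z i\<bar> \<and> l < i}"
    using assms by auto
qed

lemma rank_inj:
  assumes "finite S"
  shows "inj_on (blk_rank z S) S"
proof (rule inj_onI)
  fix i j assume ij: "i \<in> S" "j \<in> S" "blk_rank z S i = blk_rank z S j"
  show "i = j"
  proof (rule ccontr)
    assume "i \<noteq> j"
    hence "(\<bar>z j\<bar> > \<bar>z i\<bar> \<or> (\<bar>z j\<bar> = \<bar>z i\<bar> \<and> j < i)) \<or>
           (\<bar>z i\<bar> > \<bar>z j\<bar> \<or> (\<bar>z i\<bar> = \<bar>z j\<bar> \<and> i < j))" by linarith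
    thus False using rank_lt[OF assms ij(1,2), of z] rank_lt[OF assms ij(2,1), of z] ij(3) by auto
  qed
qed

lemma rank_range:
  assumes "finite S" "i \<in> S"
  shows "blk_rank z S i < card S"
  unfolding blk_rank_def
  by (rule psubset_card_mono) (use assms in auto)

lemma rank_bij:
  assumes "finite S"
  shows "bij_betw (blk_rank z S) S {..<card S}"
proof -
  have "blk_rank z S ` S \<subseteq> {..<card S}" using rank_range[OF assms] by auto
  moreover have "card (blk_rank z S ` S) = card S" using card_image[OF rank_inj[OF assms]] .
  ultimately have "blk_rank z S ` S = {..<card S}"
    by (simp add: card_subset_eq)
  thus ?thesis using rank_inj[OF assms] by (simp add: bij_betw_def)
qed

lemma card_sel:
  assumes "finite S"
  shows "card {i \<in> S. blk_rank z S i < m} = min m (card S)"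
proof -
  have b: "bij_betw (blk_rank z S) S {..<card S}" using rank_bij[OF assms] .
  have "bij_betw (blk_rank z S) {i \<in> S. blk_rank z S i < m} {k \<in> {..<card S}. k < m}"
    using b unfolding bij_betw_def inj_on_def by auto
  hence "card {i \<in> S. blk_rank z S i < m} = card {k \<in> {..<card S}. k < m}"
    by (rule bij_betw_same_card)
  also have "{k \<in> {..<card S}. k < m} = {..<min m (card S)}" by auto
  finally show ?thesis by simp
qed

lemma sel_ge:
  assumes "finite S" "i \<in> S" "blk_rank z S i < m" "j \<in> S" "\<not> blk_rank z S j < m"
  shows "\<bar>z j\<bar> \<le> \<bar>z i\<bar>"
proof (rule ccontr)
  assume "\<not> \<bar>z j\<bar> \<le> \<bar>z i\<bar>"
  hence "blk_rank z S j < blk_rank z S i" using rank_lt[OF assms(1,2,4)] by auto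
  thus False using assms by auto
qed

lemma top_max:
  assumes "finite S" "T \<subseteq> S" "card T \<le> m"
  shows "(\<Sum>i\<in>T. \<bar>z i\<bar>) \<le> (\<Sum>i\<in>{i \<in> S. blk_rank z S i < m}. \<bar>z i\<bar>)"
proof -
  define Sel where "Sel = {i \<in> S. blk_rank z S i < m}"
  have fT: "finite T" using assms finite_subset by blast
  have fS: "finite Sel" using assms unfolding Sel_def by simp
  have cS: "card Sel = min m (card S)" unfolding Sel_def using card_sel[OF assms(1)] .
  have key: "(\<Sum>i\<in>T - Sel. \<bar>z i\<bar>) \<le> (\<Sum>i\<in>Sel - T. \<bar>z i\<bar>)"
  proof (cases "T - Sel = {}")
    case True then show ?thesis by (simp only: sum.empty sum_nonneg abs_ge_zero)
  next
    case False
    hence "Sel \<noteq> S" using assms(2) by auto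
    moreover have "Sel \<subseteq> S" unfolding Sel_def by auto
    ultimately have "card Sel < card S" using assms(1) by (simp add: psubset_card_mono psubsetI)
    hence cm: "card Sel = m" using cS by auto
    have c1: "card (T - Sel) = card T - card (T \<inter> Sel)" using fT
      by (simp add: card_Diff_subset_Int)
    have c2: "card (Sel - T) = card Sel - card (T \<inter> Sel)" using fS
      by (simp add: card_Diff_subset_Int Int_commute)
    have cle: "card (T - Sel) \<le> card (Sel - T)" using c1 c2 cm assms(3) by linarith
    have ne: "Sel - T \<noteq> {}"
    proof
      assume "Sel - T = {}"
      hence "card (T - Sel) = 0" using cle by (metis card.empty le_zero_eq)
      thus False using False fT by simp
    qed
    define a where "a = Min ((\<lambda>i. \<bar>z i\<bar>) ` (Sel - T))"
    have a_le: "\<And>i. i \<in> Sel - T \<Longrightarrow> a \<le> \<bar>z i\<bar>" unfolding a_def using fS by simp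
    have a_in: "a \<in> (\<lambda>i. \<bar>z i\<bar>) ` (Sel - T)" unfolding a_def using fS ne by simp
    hence a0: "0 \<le> a" by auto
    have ge_a: "\<And>j. j \<in> T - Sel \<Longrightarrow> \<bar>z j\<bar> \<le> a"
    proof -
      fix j assume j: "j \<in> T - Sel"
      from a_in obtain i where i: "i \<in> Sel - T" "a = \<bar>z i\<bar>" by auto
      show "\<bar>z j\<bar> \<le> a" using sel_ge[OF assms(1), of i z m j] i j assms(2)
        unfolding Sel_def by auto
    qed
    have "(\<Sum>i\<in>T - Sel. \<bar>z i\<bar>) \<le> (\<Sum>i\<in>T - Sel. a)" using ge_a by (rule sum_mono)
    also have "\<dots> = real (card (T - Sel)) * a" by simp
    also have "\<dots> \<le> real (card (Sel - T)) * a" using cle a0 by (simp add: mult_right_mono)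
    also have "\<dots> = (\<Sum>i\<in>Sel - T. a)" by simp
    also have "\<dots> \<le> (\<Sum>i\<in>Sel - T. \<bar>z i\<bar>)" using a_le by (rule sum_mono)
    finally show ?thesis .
  qed
  have e1: "(\<Sum>i\<in>T. \<bar>z i\<bar>) = (\<Sum>i\<in>T - Sel. \<bar>z i\<bar>) + (\<Sum>i\<in>T \<inter> Sel. \<bar>z i\<bar>)"
    using sum.Int_Diff[OF fT, of "\<lambda>i. \<bar>z i\<bar>" Sel] by simp
  have e2: "(\<Sum>i\<in>Sel. \<bar>z i\<bar>) = (\<Sum>i\<in>Sel - T. \<bar>z i\<bar>) + (\<Sum>i\<in>T \<inter> Sel. \<bar>z i\<bar>)"
    using sum.Int_Diff[OF fS, of "\<lambda>i. \<bar>z i\<bar>" T] by (simp add: Int_commute)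
  show ?thesis using key e1 e2 unfolding Sel_def[symmetric] by linarith
qed


lemma blk_start_mono:
  assumes "k \<le> k'" shows "blk_start ds k \<le> blk_start ds k'"
proof -
  have "take k' ds = take k ds @ take (k' - k) (drop k ds)"
    using take_add[of k "k' - k" ds] assms by simp
  thus ?thesis unfolding blk_start_def by (metis le_add1 sum_list_append)
qed

lemma blk_start_Suc:
  assumes "k < length ds" shows "blk_start ds (Suc k) = blk_start ds k + ds ! k"
  unfolding blk_start_def using assms by (simp add: take_Suc_conv_app_nth)

lemma blk_unique:
  assumes "k < length ds" "k' < length ds" "i \<in> blk ds k" "i \<in> blk ds k'"
  shows "k = k'"
proof (rule ccontr)
  assume "k \<noteq> k'"
  hence "k < k' \<or> k' < k" by auto
  thus False
  proof
    assume "k < k'"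
    hence "blk_start ds k + ds ! k \<le> blk_start ds k'"
      using blk_start_Suc[OF assms(1)] blk_start_mono[of "Suc k" k' ds] by simp
    thus False using assms(3,4) unfolding blk_def by auto
  next
    assume "k' < k"
    hence "blk_start ds k' + ds ! k' \<le> blk_start ds k"
      using blk_start_Suc[OF assms(2)] blk_start_mono[of "Suc k'" k ds] by simp
    thus False using assms(3,4) unfolding blk_def by auto
  qed
qed

lemma blk_cover: "{..<sum_list ds} = (\<Union>k<length ds. blk ds k)"
proof (induction ds rule: rev_induct)
  case Nil
  then show ?case by simp
next
  case (snoc a ds)
  have b1: "blk (ds @ [a]) k = blk ds k" if "k < length ds" for k
    using that unfolding blk_def blk_start_def by (simp add: nth_append)
  have b2: "blk (ds @ [a]) (length ds) = {sum_list ds..<sum_list ds + a}"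
    unfolding blk_def blk_start_def by simp
  have "(\<Union>k<length (ds @ [a]). blk (ds @ [a]) k)
      = (\<Union>k<length ds. blk (ds @ [a]) k) \<union> blk (ds @ [a]) (length ds)"
    by (simp add: lessThan_Suc Un_commute)
  also have "\<dots> = {..<sum_list ds} \<union> {sum_list ds..<sum_list ds + a}"
    using b1 b2 snoc.IH by simp
  also have "\<dots> = {..<sum_list (ds @ [a])}" by auto
  finally show ?case by simp
qed

definition Msz :: "nat list \<Rightarrow> real \<Rightarrow> nat \<Rightarrow> nat" where
  "Msz ds \<alpha> k = nat \<lceil>real (ds ! k) * \<alpha>\<rceil>"

definition Sel :: "nat list \<Rightarrow> real \<Rightarrow> (nat \<Rightarrow> real) \<Rightarrow> nat \<Rightarrow> nat set" where
  "Sel ds \<alpha> z k = {i \<in> blk ds k. blk_rank z (blk ds k) i < Msz ds \<alpha> k}"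

lemma FLT_blk:
  assumes "k < length ds" "i \<in> blk ds k"
  shows "FLT ds \<alpha> z i = (if blk_rank z (blk ds k) i < Msz ds \<alpha> k then 1 else 0)"
proof -
  have "(\<exists>k'<length ds. i \<in> blk ds k' \<and>
       blk_rank z (blk ds k') i < nat \<lceil>real (ds ! k') * \<alpha>\<rceil>) \<longleftrightarrow>
        blk_rank z (blk ds k) i < Msz ds \<alpha> k"
    unfolding Msz_def using assms blk_unique[OF assms(1) _ assms(2)] by metis
  thus ?thesis unfolding FLT_def by presburger
qed

lemma top_decomp:
  "top_norm ds \<alpha> z = (\<Sum>k<length ds. \<Sum>i\<in>Sel ds \<alpha> z k. \<bar>z i\<bar>)"
proof -
  have "top_norm ds \<alpha> z = (\<Sum>i\<in>(\<Union>k<length ds. blk ds k). \<bar>z i * FLT ds \<alpha> z i\<bar>)"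
    unfolding top_norm_def blk_cover[symmetric] ..
  also have "\<dots> = (\<Sum>k<length ds. \<Sum>i\<in>blk ds k. \<bar>z i * FLT ds \<alpha> z i\<bar>)"
    apply (rule sum.UNION_disjoint)
      apply simp
     apply (simp add: blk_def)
    using blk_unique by blast
  also have "\<dots> = (\<Sum>k<length ds. \<Sum>i\<in>Sel ds \<alpha> z k. \<bar>z i\<bar>)"
  proof (rule sum.cong[OF refl])
    fix k assume k: "k \<in> {..<length ds}"
    have "(\<Sum>i\<in>blk ds k. \<bar>z i * FLT ds \<alpha> z i\<bar>)
        = (\<Sum>i\<in>blk ds k. if blk_rank z (blk ds k) i < Msz ds \<alpha> k then \<bar>z i\<bar> else 0)"
      by (rule sum.cong[OF refl]) (use k FLT_blk in auto)
    also have "\<dots> = (\<Sum>i\<in>Sel ds \<alpha> z k. \<bar>z i\<bar>)"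
      unfolding Sel_def by (rule sum.inter_filter[symmetric]) (simp add: blk_def)
    finally show "(\<Sum>i\<in>blk ds k. \<bar>z i * FLT ds \<alpha> z i\<bar>) = (\<Sum>i\<in>Sel ds \<alpha> z k. \<bar>z i\<bar>)" .
  qed
  finally show ?thesis .
qed

lemma top_max_blk:
  assumes "T \<subseteq> blk ds k" "card T \<le> Msz ds \<alpha> k"
  shows "(\<Sum>i\<in>T. \<bar>z i\<bar>) \<le> (\<Sum>i\<in>Sel ds \<alpha> z k. \<bar>z i\<bar>)"
  unfolding Sel_def by (rule top_max) (use assms in \<open>auto simp: blk_def\<close>)

lemma card_Sel: "card (Sel ds \<alpha> z k) \<le> Msz ds \<alpha> k"
  unfolding Sel_def using card_sel[of "blk ds k" z "Msz ds \<alpha> k"] by (simp add: blk_def)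

lemma rank_scale:
  assumes "c \<noteq> 0"
  shows "blk_rank (\<lambda>i. c * z i) S = blk_rank z S"
proof -
  have "\<bar>c\<bar> > 0" using assms by simp
  thus ?thesis unfolding blk_rank_def by (simp add: abs_mult)
qed

theorem proposition1:
  fixes ds :: "nat list" and \<alpha> :: real
  assumes "0 < \<alpha>" and "\<alpha> \<le> 1"
  shows "is_norm_on (vecs (sum_list ds)) (top_norm ds \<alpha>)"
  unfolding is_norm_on_def
proof (intro conjI ballI allI)
  fix z show "0 \<le> top_norm ds \<alpha> z" unfolding top_norm_def by (simp add: sum_nonneg)
next
  fix z assume z: "z \<in> vecs (sum_list ds)"
  show "top_norm ds \<alpha> z = 0 \<longleftrightarrow> z = (\<lambda>_. 0)"
  proof
    assume "z = (\<lambda>_. 0)" thus "top_norm ds \<alpha> z = 0" unfolding top_norm_def by simp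
  next
    assume h: "top_norm ds \<alpha> z = 0"
    show "z = (\<lambda>_. 0)"
    proof (rule ccontr)
      assume "z \<noteq> (\<lambda>_. 0)"
      then obtain i0 where i0: "z i0 \<noteq> 0" by auto
      have "i0 < sum_list ds" using z i0 unfolding vecs_def by (metis (mono_tags) mem_Collect_eq not_le)
      then obtain k where k: "k < length ds" "i0 \<in> blk ds k" using blk_cover by auto
      hence "ds ! k > 0" unfolding blk_def by auto
      hence "real (ds ! k) * \<alpha> > 0" using assms by simp
      hence "Msz ds \<alpha> k \<ge> 1" unfolding Msz_def by linarith
      hence "(\<Sum>i\<in>{i0}. \<bar>z i\<bar>) \<le> (\<Sum>i\<in>Sel ds \<alpha> z k. \<bar>z i\<bar>)"
        using k by (intro top_max_blk) auto
      also have "\<dots> \<le> (\<Sum>k<length ds. \<Sum>i\<in>Sel ds \<alpha> z k. \<bar>z i\<bar>)"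
        using k by (intro member_le_sum) (auto intro: sum_nonneg)
      also have "\<dots> = 0" using h top_decomp by metis
      finally show False using i0 by simp
    qed
  qed
next
  fix c :: real and z
  show "top_norm ds \<alpha> (\<lambda>i. c * z i) = \<bar>c\<bar> * top_norm ds \<alpha> z"
  proof (cases "c = 0")
    case True thus ?thesis unfolding top_norm_def by simp
  next
    case False
    have "FLT ds \<alpha> (\<lambda>i. c * z i) = FLT ds \<alpha> z"
      unfolding FLT_def[abs_def] rank_scale[OF False] ..
    thus ?thesis unfolding top_norm_def by (simp add: abs_mult sum_distrib_left mult.assoc)
  qed
next
  fix x y :: "nat \<Rightarrow> real"
  let ?s = "\<lambda>i::nat. x i + y i"
  have "top_norm ds \<alpha> ?s = (\<Sum>k<length ds. \<Sum>i\<in>Sel ds \<alpha> ?s k. \<bar>x i + y i\<bar>)"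
    by (rule top_decomp)
  also have "\<dots> \<le> (\<Sum>k<length ds. (\<Sum>i\<in>Sel ds \<alpha> x k. \<bar>x i\<bar>) + (\<Sum>i\<in>Sel ds \<alpha> y k. \<bar>y i\<bar>))"
  proof (rule sum_mono)
    fix k
    have sub: "Sel ds \<alpha> ?s k \<subseteq> blk ds k" unfolding Sel_def by auto
    have "(\<Sum>i\<in>Sel ds \<alpha> ?s k. \<bar>x i + y i\<bar>) \<le> (\<Sum>i\<in>Sel ds \<alpha> ?s k. \<bar>x i\<bar> + \<bar>y i\<bar>)"
      by (rule sum_mono) (rule abs_triangle_ineq)
    also have "\<dots> = (\<Sum>i\<in>Sel ds \<alpha> ?s k. \<bar>x i\<bar>) + (\<Sum>i\<in>Sel ds \<alpha> ?s k. \<bar>y i\<bar>)"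
      by (rule sum.distrib)
    also have "\<dots> \<le> (\<Sum>i\<in>Sel ds \<alpha> x k. \<bar>x i\<bar>) + (\<Sum>i\<in>Sel ds \<alpha> y k. \<bar>y i\<bar>)"
      by (intro add_mono top_max_blk sub card_Sel)
    finally show "(\<Sum>i\<in>Sel ds \<alpha> ?s k. \<bar>x i + y i\<bar>)
        \<le> (\<Sum>i\<in>Sel ds \<alpha> x k. \<bar>x i\<bar>) + (\<Sum>i\<in>Sel ds \<alpha> y k. \<bar>y i\<bar>)" .
  qed
  also have "\<dots> = top_norm ds \<alpha> x + top_norm ds \<alpha> y"
    by (simp add: top_decomp sum.distrib)
  finally show "top_norm ds \<alpha> ?s \<le> top_norm ds \<alpha> x + top_norm ds \<alpha> y" .
qed

end
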